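(* Let $\tau_{U,Q}:U\to Q$ be a fibre bundle with local coordinates $(q^i,u^a)$, let $\Gamma:U\to TQ$ be smooth with $\tau_{TQ}\circ\Gamma=\tau_{U,Q}$, locally $\Gamma(q,u)=(q^i,\Gamma^i(q,u))$, and let $L:U\to\mathbb R$ be smooth. Let $\Sigma=\{\mu\in T^*_{\Gamma(u)}TQ:\ u\in U,\ (T_u\Gamma)^*\mu=dL(u)\}$ and define $H(q,p,u)=p_i\Gamma^i(q,u)-L(q,u)$. A curve $\sigma:[t_0,t_1]\to Q$ (in a chart) is a solution of the generalized variational problem determined by $\Sigma$ if and only if there exist curves $u(t)$ and $\tilde\mu(t)=(\tilde\mu_i(t))$ such that $$\frac{d\tilde\mu_i}{dt}=-\frac{\partial H}{\partial q^i}(q,\tilde\mu,u),\qquad \frac{\partial H}{\partial u^a}(q,\tilde\mu,u)=0,\qquad \frac{dq^i}{dt}=\frac{\partial H}{\partial p_i}(q,\tilde\mu,u)=\Gamma^i(q,u).$$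
   Context: A solution of the generalized variational problem determined by $\Sigma\subset T^*TQ$ is a curve $\sigma$ for which there exists a curve $\mu:[t_0,t_1]\to\Sigma$ with $\pi_{TTQ}(\mu(t))=\dot\sigma(t)$ and $\int_{t_0}^{t_1}\langle\mu(t),X^T(t,\dot\sigma(t))\rangle dt=0$ for all time-dependent vector fields $X=X^i(t,q)\partial_{q^i}$ vanishing at $(t_0,\sigma(t_0))$ and $(t_1,\sigma(t_1))$, where $X^T=X^i\partial_{q^i}+(\partial_tX^i+\dot q^j\partial_{q^j}X^i)\partial_{\dot q^i}$. Coordinates on $T^*TQ$: $\mu=\mu_idq^i+\tilde\mu_id\dot q^i$. *)

theory Defs
  imports "HOL-Analysis.Analysis"
begin

fun iter_deriv :: "'a::real_normed_vector list \<Rightarrow> ('a \<Rightarrow> 'b::real_normed_vector) \<Rightarrow> 'a \<Rightarrow> 'b" where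
  "iter_deriv [] f = f"
| "iter_deriv (v # vs) f = (\<lambda>x. frechet_derivative (iter_deriv vs f) (at x) v)"

definition smooth_fun :: "('a::euclidean_space \<Rightarrow> 'b::real_normed_vector) \<Rightarrow> bool" where
  "smooth_fun f \<longleftrightarrow> (\<forall>vs x. iter_deriv vs f differentiable (at x))"

text \<open>Local chart: Q = R^n (coordinates q), U = Q x R^m (coordinates (q,u)),
  TQ = R^n x R^n (coordinates (q, qdot)), T*TQ element = (base point in TQ, (mu_i, mu~_i)).
  Gamma is given by its fibre part Gam(q,u) = (Gamma^i(q,u)).\<close>

definition Gamma_map :: "((real^'n) \<times> (real^'m) \<Rightarrow> real^'n) \<Rightarrow> (real^'n) \<times> (real^'m) \<Rightarrow> (real^'n) \<times> (real^'n)" where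
  "Gamma_map Gam z = (fst z, Gam z)"

definition Sigma_set ::
  "((real^'n) \<times> (real^'m) \<Rightarrow> real^'n) \<Rightarrow> ((real^'n) \<times> (real^'m) \<Rightarrow> real)
     \<Rightarrow> (((real^'n) \<times> (real^'n)) \<times> ((real^'n) \<times> (real^'n))) set" where
  "Sigma_set Gam L = {(Gamma_map Gam z, (m, mt)) | z m mt.
      \<forall>w. m \<bullet> fst (frechet_derivative (Gamma_map Gam) (at z) w)
          + mt \<bullet> snd (frechet_derivative (Gamma_map Gam) (at z) w)
        = frechet_derivative L (at z) w}"

text \<open>Complete lift X^T(t,(q,qdot)) = (X(t,q), d_t X + qdot^j d_{q^j} X).\<close>
definition complete_lift :: "(real \<times> (real^'n) \<Rightarrow> real^'n) \<Rightarrow> real \<Rightarrow> (real^'n) \<times> (real^'n) \<Rightarrow> (real^'n) \<times> (real^'n)" where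
  "complete_lift X t qv = (X (t, fst qv), frechet_derivative X (at (t, fst qv)) (1, snd qv))"

definition pairing :: "(real^'n) \<times> (real^'n) \<Rightarrow> (real^'n) \<times> (real^'n) \<Rightarrow> real" where
  "pairing mu w = fst mu \<bullet> fst w + snd mu \<bullet> snd w"

text \<open>Solution of the generalized variational problem determined by Sigma.
  Curves are smooth (restrictions to [t0,t1] of smooth curves on R);
  test vector fields are smooth time-dependent vector fields.\<close>
definition gen_var_solution ::
  "(((real^'n) \<times> (real^'n)) \<times> ((real^'n) \<times> (real^'n))) set \<Rightarrow> real \<Rightarrow> real \<Rightarrow> (real \<Rightarrow> real^'n) \<Rightarrow> bool" where
  "gen_var_solution Sig t0 t1 \<sigma> \<longleftrightarrow>
     (\<exists>\<mu> :: real \<Rightarrow> ((real^'n) \<times> (real^'n)) \<times> ((real^'n) \<times> (real^'n)).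
        smooth_fun \<mu> \<and> (\<forall>t\<in>{t0..t1}. \<mu> t \<in> Sig) \<and>
        (\<forall>t\<in>{t0..t1}. fst (\<mu> t) = (\<sigma> t, vector_derivative \<sigma> (at t))) \<and>
        (\<forall>X :: real \<times> (real^'n) \<Rightarrow> real^'n.
            smooth_fun X \<and> X (t0, \<sigma> t0) = 0 \<and> X (t1, \<sigma> t1) = 0 \<longrightarrow>
            integral {t0..t1}
              (\<lambda>t. pairing (snd (\<mu> t)) (complete_lift X t (\<sigma> t, vector_derivative \<sigma> (at t)))) = 0))"

definition Ham :: "((real^'n) \<times> (real^'m) \<Rightarrow> real^'n) \<Rightarrow> ((real^'n) \<times> (real^'m) \<Rightarrow> real)
     \<Rightarrow> real^'n \<Rightarrow> real^'n \<Rightarrow> real^'m \<Rightarrow> real" where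
  "Ham Gam L q p u = p \<bullet> Gam (q, u) - L (q, u)"

definition dH_dq :: "((real^'n) \<times> (real^'m) \<Rightarrow> real^'n) \<Rightarrow> ((real^'n) \<times> (real^'m) \<Rightarrow> real)
     \<Rightarrow> real^'n \<Rightarrow> real^'n \<Rightarrow> real^'m \<Rightarrow> 'n \<Rightarrow> real" where
  "dH_dq Gam L q p u i = frechet_derivative (\<lambda>q'. Ham Gam L q' p u) (at q) (axis i 1)"

definition dH_dp :: "((real^'n) \<times> (real^'m) \<Rightarrow> real^'n) \<Rightarrow> ((real^'n) \<times> (real^'m) \<Rightarrow> real)
     \<Rightarrow> real^'n \<Rightarrow> real^'n \<Rightarrow> real^'m \<Rightarrow> 'n \<Rightarrow> real" where
  "dH_dp Gam L q p u i = frechet_derivative (\<lambda>p'. Ham Gam L q p' u) (at p) (axis i 1)"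

definition dH_du :: "((real^'n) \<times> (real^'m) \<Rightarrow> real^'n) \<Rightarrow> ((real^'n) \<times> (real^'m) \<Rightarrow> real)
     \<Rightarrow> real^'n \<Rightarrow> real^'n \<Rightarrow> real^'m \<Rightarrow> 'm \<Rightarrow> real" where
  "dH_du Gam L q p u a = frechet_derivative (\<lambda>u'. Ham Gam L q p u') (at u) (axis a 1)"

end

theory Submission
  imports Defs
begin


lemma iter_deriv_append: "iter_deriv (vs @ ws) f = iter_deriv vs (iter_deriv ws f)"
  by (induction vs) auto

lemma smooth_iter: "smooth_fun f \<Longrightarrow> smooth_fun (iter_deriv ws f)"
  unfolding smooth_fun_def by (metis iter_deriv_append)

lemma smooth_diff: "smooth_fun f \<Longrightarrow> f differentiable (at x)"
  unfolding smooth_fun_def by (metis iter_deriv.simps(1))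

lemma smooth_cont: "smooth_fun f \<Longrightarrow> continuous_on S f"
  by (meson differentiable_at_imp_differentiable_on differentiable_imp_continuous_on smooth_diff)

lemma smooth_has_derivative: "smooth_fun f \<Longrightarrow> (f has_derivative frechet_derivative f (at x)) (at x)"
  using smooth_diff frechet_derivative_works by blast

lemma smooth_linear:
  assumes "bounded_linear h" "smooth_fun f"
  shows "smooth_fun (\<lambda>x. h (f x))"
proof -
  have "\<forall>x. iter_deriv vs (\<lambda>x. h (f x)) x = h (iter_deriv vs f x)" for vs
  proof (induction vs)
    case Nil then show ?case by simp
  next
    case (Cons v vs)
    have e: "iter_deriv vs (\<lambda>x. h (f x)) = (\<lambda>x. h (iter_deriv vs f x))" using Cons by auto
    show ?case
    proof
      fix x
      have "(iter_deriv vs f has_derivative frechet_derivative (iter_deriv vs f) (at x)) (at x)"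
        using smooth_has_derivative[OF smooth_iter[OF assms(2)]] .
      then have "((\<lambda>x. h (iter_deriv vs f x)) has_derivative (\<lambda>y. h (frechet_derivative (iter_deriv vs f) (at x) y))) (at x)"
        using bounded_linear.has_derivative[OF assms(1)] by blast
      then show "iter_deriv (v # vs) (\<lambda>x. h (f x)) x = h (iter_deriv (v # vs) f x)"
        by (simp add: e frechet_derivative_at[symmetric])
    qed
  qed
  then have e: "iter_deriv vs (\<lambda>x. h (f x)) = (\<lambda>x. h (iter_deriv vs f x))" for vs by auto
  show ?thesis unfolding smooth_fun_def e
  proof (intro allI)
    fix vs x
    show "(\<lambda>x. h (iter_deriv vs f x)) differentiable at x"
      using bounded_linear.has_derivative[OF assms(1) smooth_has_derivative[OF smooth_iter[OF assms(2)]]]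
      unfolding differentiable_def by blast
  qed
qed

lemma smooth_pair:
  assumes "smooth_fun f" "smooth_fun g"
  shows "smooth_fun (\<lambda>x. (f x, g x))"
proof -
  have "\<forall>x. iter_deriv vs (\<lambda>x. (f x, g x)) x = (iter_deriv vs f x, iter_deriv vs g x)" for vs
  proof (induction vs)
    case Nil then show ?case by simp
  next
    case (Cons v vs)
    have e: "iter_deriv vs (\<lambda>x. (f x, g x)) = (\<lambda>x. (iter_deriv vs f x, iter_deriv vs g x))" using Cons by auto
    show ?case
    proof
      fix x
      have "((\<lambda>x. (iter_deriv vs f x, iter_deriv vs g x)) has_derivative
         (\<lambda>y. (frechet_derivative (iter_deriv vs f) (at x) y, frechet_derivative (iter_deriv vs g) (at x) y))) (at x)"
        using smooth_has_derivative[OF smooth_iter[OF assms(1)]] smooth_has_derivative[OF smooth_iter[OF assms(2)]]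
        by (rule has_derivative_Pair)
      then show "iter_deriv (v # vs) (\<lambda>x. (f x, g x)) x = (iter_deriv (v # vs) f x, iter_deriv (v # vs) g x)"
        by (simp add: e frechet_derivative_at[symmetric])
    qed
  qed
  then have e: "iter_deriv vs (\<lambda>x. (f x, g x)) = (\<lambda>x. (iter_deriv vs f x, iter_deriv vs g x))" for vs by auto
  show ?thesis unfolding smooth_fun_def e
    by (metis assms differentiable_def has_derivative_Pair smooth_diff smooth_iter)
qed

lemma smooth_vd:
  fixes f :: "real \<Rightarrow> 'b::real_normed_vector"
  assumes "smooth_fun f"
  shows "iter_deriv [1] f = (\<lambda>t. vector_derivative f (at t))"
proof
  fix t
  have "(f has_vector_derivative vector_derivative f (at t)) (at t)"
    using smooth_diff[OF assms] vector_derivative_works by blast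
  then have "frechet_derivative f (at t) = (\<lambda>x. x *\<^sub>R vector_derivative f (at t))"
    by (simp add: has_vector_derivative_def frechet_derivative_at[symmetric])
  then show "iter_deriv [1] f t = vector_derivative f (at t)" by simp
qed

lemma smooth_vd_smooth:
  fixes f :: "real \<Rightarrow> 'b::real_normed_vector"
  assumes "smooth_fun f"
  shows "smooth_fun (\<lambda>t. vector_derivative f (at t))"
  using smooth_iter[OF assms, of "[1]"] smooth_vd[OF assms] by simp

lemma smooth_hvd:
  fixes f :: "real \<Rightarrow> 'b::real_normed_vector"
  assumes "smooth_fun f"
  shows "(f has_vector_derivative vector_derivative f (at t)) (at t)"
  using smooth_diff[OF assms] vector_derivative_works by blast


lemma poly_iter:
  fixes c :: "'b::real_normed_vector"
  shows "\<forall>\<phi>. real_polynomial_function \<phi> \<longrightarrow> (\<exists>\<psi>. real_polynomial_function \<psi> \<and>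
     iter_deriv vs (\<lambda>x::real \<times> 'a::real_normed_vector. \<phi> (fst x) *\<^sub>R c) = (\<lambda>x. \<psi> (fst x) *\<^sub>R c))"
proof (induction vs)
  case Nil then show ?case by auto
next
  case (Cons v vs)
  show ?case
  proof (intro allI impI)
    fix \<phi> :: "real \<Rightarrow> real" assume "real_polynomial_function \<phi>"
    then obtain \<psi> where psi: "real_polynomial_function \<psi>"
      "iter_deriv vs (\<lambda>x::real \<times> 'a. \<phi> (fst x) *\<^sub>R c) = (\<lambda>x. \<psi> (fst x) *\<^sub>R c)"
      using Cons by blast
    obtain \<psi>' where psi': "real_polynomial_function \<psi>'" "\<And>x. (\<psi> has_real_derivative \<psi>' x) (at x)"
      using has_real_derivative_polynomial_function[OF psi(1)] by blast
    have d: "((\<lambda>x::real \<times> 'a. \<psi> (fst x) *\<^sub>R c) has_derivative (\<lambda>h. (fst h * \<psi>' (fst x)) *\<^sub>R c)) (at x)" for x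
    proof -
      have "(\<psi> has_derivative (*) (\<psi>' (fst x))) (at (fst x))"
        using psi'(2) has_field_derivative_def by blast
      from diff_chain_at[OF has_derivative_fst[OF has_derivative_ident] this]
      have "((\<lambda>x::real \<times> 'a. \<psi> (fst x)) has_derivative (\<lambda>h. fst h * \<psi>' (fst x))) (at x)"
        by (simp add: o_def mult.commute)
      then show ?thesis by (rule has_derivative_scaleR_left)
    qed
    have "iter_deriv (v # vs) (\<lambda>x::real \<times> 'a. \<phi> (fst x) *\<^sub>R c) = (\<lambda>x. (fst v * \<psi>' (fst x)) *\<^sub>R c)"
    proof (rule ext)
      fix x
      show "iter_deriv (v # vs) (\<lambda>x::real \<times> 'a. \<phi> (fst x) *\<^sub>R c) x = (fst v * \<psi>' (fst x)) *\<^sub>R c"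
        using frechet_derivative_at[OF d[of x], symmetric] by (simp add: psi(2))
    qed
    moreover have "real_polynomial_function (\<lambda>s. fst v * \<psi>' s)" using psi'(1) by auto
    ultimately show "\<exists>\<psi>. real_polynomial_function \<psi> \<and> iter_deriv (v # vs) (\<lambda>x::real \<times> 'a. \<phi> (fst x) *\<^sub>R c) = (\<lambda>x. \<psi> (fst x) *\<^sub>R c)"
      by (intro exI[of _ "\<lambda>s. fst v * \<psi>' s"]) simp
  qed
qed

lemma poly_smooth:
  fixes c :: "'b::real_normed_vector"
  assumes "real_polynomial_function \<phi>"
  shows "smooth_fun (\<lambda>x::real \<times> 'a::euclidean_space. \<phi> (fst x) *\<^sub>R c)"
  unfolding smooth_fun_def
proof (intro allI)
  fix vs and x :: "real \<times> 'a"
  obtain \<psi> where psi: "real_polynomial_function \<psi>"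
      "iter_deriv vs (\<lambda>x::real \<times> 'a. \<phi> (fst x) *\<^sub>R c) = (\<lambda>x. \<psi> (fst x) *\<^sub>R c)"
    using poly_iter assms by blast
  obtain \<psi>' where psi': "\<And>x. (\<psi> has_real_derivative \<psi>' x) (at x)"
    using has_real_derivative_polynomial_function[OF psi(1)] by blast
  have "(\<psi> has_derivative (*) (\<psi>' (fst x))) (at (fst x))"
    using psi' has_field_derivative_def by blast
  from diff_chain_at[OF has_derivative_fst[OF has_derivative_ident] this]
  have "((\<lambda>x::real \<times> 'a. \<psi> (fst x)) has_derivative (\<lambda>h. fst h * \<psi>' (fst x))) (at x)"
    by (simp add: o_def mult.commute)
  from has_derivative_scaleR_left[OF this, of c]
  show "iter_deriv vs (\<lambda>x::real \<times> 'a. \<phi> (fst x) *\<^sub>R c) differentiable at x"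
    unfolding psi(2) differentiable_def by blast
qed

lemma DBR:
  fixes g :: "real \<Rightarrow> real"
  assumes ab: "a < b" and g: "continuous_on {a..b} g"
    and H: "\<And>p. real_polynomial_function p \<Longrightarrow> integral {a..b} (\<lambda>t. g t * ((t - a) * (b - t) * p t)) = 0"
  shows "\<forall>t\<in>{a..b}. g t = 0"
proof -
  define w where "w t = (t - a) * (b - t)" for t
  have wc: "continuous_on {a..b} w" unfolding w_def by (intro continuous_intros)
  have w0: "t \<in> {a..b} \<Longrightarrow> 0 \<le> w t" for t unfolding w_def by auto
  define C where "C = integral {a..b} (\<lambda>t. \<bar>g t\<bar> * w t)"
  define I where "I = integral {a..b} (\<lambda>t. g t * g t * w t)"
  have bound: "\<bar>I\<bar> \<le> e * C" if e: "e > 0" for e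
  proof -
    obtain p where p: "polynomial_function p" "\<forall>x\<in>{a..b}. norm (g x - p x) < e"
      using Stone_Weierstrass_polynomial_function[OF compact_Icc g e] by blast
    have rp: "real_polynomial_function p" using p(1) real_polynomial_function_eq by blast
    have pc: "continuous_on {a..b} p" using continuous_on_polymonial_function[OF p(1)] .
    have i1: "(\<lambda>t. g t * (g t - p t) * w t) integrable_on {a..b}"
      by (intro integrable_continuous_interval continuous_intros g pc wc)
    have i2: "(\<lambda>t. g t * (w t * p t)) integrable_on {a..b}"
      by (intro integrable_continuous_interval continuous_intros g pc wc)
    have "I = integral {a..b} (\<lambda>t. g t * (g t - p t) * w t + g t * (w t * p t))"
      unfolding I_def by (rule integral_cong) (simp add: algebra_simps)
    also have "\<dots> = integral {a..b} (\<lambda>t. g t * (g t - p t) * w t)"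
      using integral_add[OF i1 i2] H[OF rp] by (simp add: w_def)
    finally have Ie: "I = integral {a..b} (\<lambda>t. g t * (g t - p t) * w t)" .
    have i3: "(\<lambda>t. e * (\<bar>g t\<bar> * w t)) integrable_on {a..b}"
      by (intro integrable_continuous_interval continuous_intros g pc wc)
    have "norm I \<le> integral {a..b} (\<lambda>t. e * (\<bar>g t\<bar> * w t))"
      unfolding Ie
    proof (rule integral_norm_bound_integral[OF i1 i3])
      fix t assume t: "t \<in> {a..b}"
      have "norm (g t * (g t - p t) * w t) = \<bar>g t\<bar> * \<bar>g t - p t\<bar> * w t"
        using w0[OF t] by (simp add: abs_mult)
      also have "\<dots> \<le> \<bar>g t\<bar> * e * w t"
        using less_imp_le[OF p(2)[rule_format, OF t, unfolded real_norm_def]] w0[OF t]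
        by (intro mult_right_mono mult_left_mono) auto
      finally show "norm (g t * (g t - p t) * w t) \<le> e * (\<bar>g t\<bar> * w t)" by (simp add: algebra_simps)
    qed
    then show ?thesis unfolding C_def by simp
  qed
  have C0: "C \<ge> 0" unfolding C_def
    by (intro integral_nonneg integrable_continuous_interval continuous_intros g wc) (simp add: w0)
  have I0: "I = 0"
  proof (rule ccontr)
    assume "I \<noteq> 0"
    then have "\<bar>I\<bar> > 0" by simp
    define e where "e = \<bar>I\<bar> / (2 * (C + 1))"
    have "e > 0" unfolding e_def using C0 \<open>\<bar>I\<bar> > 0\<close> by simp
    from bound[OF this] have "\<bar>I\<bar> \<le> \<bar>I\<bar> * C / (2 * (C + 1))" by (simp add: e_def)
    moreover have "\<bar>I\<bar> * C / (2 * (C + 1)) < \<bar>I\<bar>"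
      using C0 \<open>\<bar>I\<bar> > 0\<close> by (simp add: field_simps add_nonneg_pos)
    ultimately show False by simp
  qed
  have int: "((\<lambda>t. g t * g t * w t) has_integral 0) (cbox a b)"
    using I0 unfolding I_def
    by (metis box_real(2) has_integral_integral integrable_continuous_interval continuous_on_mult g wc)
  have z: "g t * g t * w t = 0" if "t \<in> {a..b}" for t
  proof (rule has_integral_0_cbox_imp_0[OF _ _ int])
    show "continuous_on (cbox a b) (\<lambda>t. g t * g t * w t)" using g wc by (auto intro!: continuous_intros)
    show "\<And>x. x \<in> box a b \<Longrightarrow> 0 \<le> g x * g x * w x" using w0 by (auto simp: box_real)
    show "box a b \<noteq> {}" using ab by (simp add: box_real)
    show "t \<in> cbox a b" using that by simp
  qed
  have "g t = 0" if "t \<in> {a<..<b}" for t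
    using z[of t] that by (auto simp: w_def)
  moreover have "closure {a<..<b} = {a..b}" using ab by simp
  ultimately show ?thesis
    using continuous_constant_on_closure[of "{a<..<b}" g] g by metis
qed


lemma hvd_nth:
  assumes "(f has_vector_derivative f') F"
  shows "((\<lambda>x. f x $ i) has_vector_derivative f' $ i) F"
  using bounded_linear.has_derivative[OF bounded_linear_vec_nth assms[unfolded has_vector_derivative_def], of i]
  unfolding has_vector_derivative_def by simp

lemma lin_basis:
  fixes f :: "real^'n \<Rightarrow> real"
  assumes "linear f"
  shows "f v = (\<Sum>i\<in>UNIV. v $ i * f (axis i 1))"
proof -
  have "f v = f (\<Sum>i\<in>UNIV. v $ i *\<^sub>R axis i 1)"
    using basis_expansion[of v] by (simp add: scalar_mult_eq_scaleR)
  also have "\<dots> = (\<Sum>i\<in>UNIV. v $ i * f (axis i 1))"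
    by (simp add: linear_sum[OF assms] linear_scale[OF assms])
  finally show ?thesis .
qed

lemma fd_Gamma:
  assumes "smooth_fun Gam"
  shows "frechet_derivative (Gamma_map Gam) (at z) w = (fst w, frechet_derivative Gam (at z) w)"
proof -
  have "(Gamma_map Gam has_derivative (\<lambda>w. (fst w, frechet_derivative Gam (at z) w))) (at z)"
    unfolding Gamma_map_def[abs_def]
    by (rule has_derivative_Pair[OF has_derivative_fst[OF has_derivative_ident] smooth_has_derivative[OF assms]])
  from frechet_derivative_at[OF this, symmetric] show ?thesis by simp
qed

lemma Sigma_mem:
  assumes "smooth_fun Gam"
  shows "x \<in> Sigma_set Gam L \<longleftrightarrow> (\<exists>z m mt. x = ((fst z, Gam z), (m, mt)) \<and>
     (\<forall>w. m \<bullet> fst w + mt \<bullet> frechet_derivative Gam (at z) w = frechet_derivative L (at z) w))"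
  unfolding Sigma_set_def by (simp add: fd_Gamma[OF assms] Gamma_map_def)

lemma Ham_deriv:
  assumes "smooth_fun Gam" "smooth_fun L" "(k has_derivative k') (at y)"
  shows "((\<lambda>y. p \<bullet> Gam (k y) - L (k y)) has_derivative
     (\<lambda>h. p \<bullet> frechet_derivative Gam (at (k y)) (k' h) - frechet_derivative L (at (k y)) (k' h))) (at y)"
proof -
  have g: "((\<lambda>y. Gam (k y)) has_derivative (\<lambda>h. frechet_derivative Gam (at (k y)) (k' h))) (at y)"
    using diff_chain_at[OF assms(3) smooth_has_derivative[OF assms(1)]] by (simp add: o_def)
  have l: "((\<lambda>y. L (k y)) has_derivative (\<lambda>h. frechet_derivative L (at (k y)) (k' h))) (at y)"
    using diff_chain_at[OF assms(3) smooth_has_derivative[OF assms(2)]] by (simp add: o_def)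
  show ?thesis
    by (rule has_derivative_diff[OF bounded_linear.has_derivative[OF bounded_linear_inner_right g] l])
qed

lemma dHq_eq:
  assumes "smooth_fun Gam" "smooth_fun L"
  shows "dH_dq Gam L q p u i = p \<bullet> frechet_derivative Gam (at (q,u)) (axis i 1, 0) - frechet_derivative L (at (q,u)) (axis i 1, 0)"
proof -
  have k: "((\<lambda>q'. (q', u)) has_derivative (\<lambda>h. (h, 0))) (at q)"
    by (rule has_derivative_Pair[OF has_derivative_ident has_derivative_const])
  show ?thesis
    unfolding dH_dq_def Ham_def using frechet_derivative_at[OF Ham_deriv[OF assms k, of p], symmetric] by simp
qed

lemma dHu_eq:
  assumes "smooth_fun Gam" "smooth_fun L"
  shows "dH_du Gam L q p u a = p \<bullet> frechet_derivative Gam (at (q,u)) (0, axis a 1) - frechet_derivative L (at (q,u)) (0, axis a 1)"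
proof -
  have k: "((\<lambda>u'. (q, u')) has_derivative (\<lambda>h. (0, h))) (at u)"
    by (rule has_derivative_Pair[OF has_derivative_const has_derivative_ident])
  show ?thesis
    unfolding dH_du_def Ham_def using frechet_derivative_at[OF Ham_deriv[OF assms k, of p], symmetric] by simp
qed

lemma dHp_eq: "dH_dp Gam L q p u i = Gam (q, u) $ i"
proof -
  have "((\<lambda>p'. p' \<bullet> Gam (q, u) - L (q, u)) has_derivative (\<lambda>h. h \<bullet> Gam (q, u) - 0)) (at p)"
    by (intro has_derivative_diff bounded_linear.has_derivative[OF bounded_linear_inner_left] has_derivative_ident has_derivative_const)
  then have "frechet_derivative (\<lambda>p'. Ham Gam L q p' u) (at p) = (\<lambda>h. h \<bullet> Gam (q, u))"
    unfolding Ham_def using frechet_derivative_at[symmetric] by simp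
  then show ?thesis unfolding dH_dp_def by (simp add: cart_eq_inner_axis inner_commute)
qed

lemma dHp_vec: "(\<chi> i. dH_dp Gam L q p u i) = Gam (q, u)"
  by (simp add: dHp_eq vec_eq_iff)


lemma curve_deriv:
  fixes X :: "real \<times> (real^'n) \<Rightarrow> real^'n"
  assumes "smooth_fun X" "(\<sigma> has_vector_derivative s') (at t)"
  shows "((\<lambda>t. X (t, \<sigma> t)) has_vector_derivative frechet_derivative X (at (t, \<sigma> t)) (1, s')) (at t)"
proof -
  have k: "((\<lambda>t. (t, \<sigma> t)) has_derivative (\<lambda>h. (h, h *\<^sub>R s'))) (at t)"
    using has_derivative_Pair[OF has_derivative_ident assms(2)[unfolded has_vector_derivative_def]] .
  have d: "((\<lambda>t. X (t, \<sigma> t)) has_derivative (\<lambda>h. frechet_derivative X (at (t, \<sigma> t)) (h, h *\<^sub>R s'))) (at t)"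
    using diff_chain_at[OF k smooth_has_derivative[OF assms(1)]] by (simp add: o_def)
  have lin: "linear (frechet_derivative X (at (t, \<sigma> t)))"
    using smooth_has_derivative[OF assms(1)] has_derivative_linear by blast
  have "(\<lambda>h. frechet_derivative X (at (t, \<sigma> t)) (h, h *\<^sub>R s')) = (\<lambda>h. h *\<^sub>R frechet_derivative X (at (t, \<sigma> t)) (1, s'))"
  proof
    fix h :: real
    have "(h, h *\<^sub>R s') = h *\<^sub>R (1::real, s')" by simp
    then show "frechet_derivative X (at (t, \<sigma> t)) (h, h *\<^sub>R s') = h *\<^sub>R frechet_derivative X (at (t, \<sigma> t)) (1, s')"
      using linear_scale[OF lin] by metis
  qed
  then show ?thesis using d unfolding has_vector_derivative_def by simp
qed

lemma X_poly_deriv: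
  fixes c :: "'b::real_normed_vector"
  assumes "\<And>s. (\<phi> has_real_derivative \<phi>' s) (at s)"
  shows "frechet_derivative (\<lambda>x::real \<times> 'a::real_normed_vector. \<phi> (fst x) *\<^sub>R c) (at x) h = (fst h * \<phi>' (fst x)) *\<^sub>R c"
proof -
  have "(\<phi> has_derivative (*) (\<phi>' (fst x))) (at (fst x))"
    using assms has_field_derivative_def by blast
  from diff_chain_at[OF has_derivative_fst[OF has_derivative_ident] this]
  have "((\<lambda>x::real \<times> 'a. \<phi> (fst x)) has_derivative (\<lambda>h. fst h * \<phi>' (fst x))) (at x)"
    by (simp add: o_def mult.commute)
  from frechet_derivative_at[OF has_derivative_scaleR_left[OF this, of c], symmetric]
  show ?thesis by simp
qed


lemma back_dir:
  fixes Gam :: "(real^'n) \<times> (real^'m) \<Rightarrow> real^'n"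
    and L :: "(real^'n) \<times> (real^'m) \<Rightarrow> real"
    and \<sigma> :: "real \<Rightarrow> real^'n"
    and t0 t1 :: real
    and u :: "real \<Rightarrow> real^'m" and mt :: "real \<Rightarrow> real^'n"
  assumes sG: "smooth_fun Gam" and sL: "smooth_fun L"
    and "t0 < t1" and ss: "smooth_fun \<sigma>" and smt: "smooth_fun mt"
    and H: "\<forall>t\<in>{t0..t1}.
          (mt has_vector_derivative (\<chi> i. - dH_dq Gam L (\<sigma> t) (mt t) (u t) i)) (at t) \<and>
          (\<forall>a. dH_du Gam L (\<sigma> t) (mt t) (u t) a = 0) \<and>
          (\<sigma> has_vector_derivative (\<chi> i. dH_dp Gam L (\<sigma> t) (mt t) (u t) i)) (at t) \<and>
          (\<chi> i. dH_dp Gam L (\<sigma> t) (mt t) (u t) i) = Gam (\<sigma> t, u t)"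
  shows "gen_var_solution (Sigma_set Gam L) t0 t1 \<sigma>"
proof -
  define D where "D t = vector_derivative mt (at t)" for t
  define \<mu> where "\<mu> = (\<lambda>t. ((\<sigma> t, vector_derivative \<sigma> (at t)), (D t, mt t)))"
  have smu: "smooth_fun \<mu>" unfolding \<mu>_def D_def
    by (intro smooth_pair ss smt smooth_vd_smooth)
  have mem: "\<mu> t \<in> Sigma_set Gam L" if t: "t \<in> {t0..t1}" for t
  proof -
    note Ht = H[rule_format, OF t]
    define z where "z = (\<sigma> t, u t)"
    have Dt: "D t = (\<chi> i. - dH_dq Gam L (\<sigma> t) (mt t) (u t) i)"
      unfolding D_def using Ht vector_derivative_at by blast
    have sd: "vector_derivative \<sigma> (at t) = Gam z"
      using Ht vector_derivative_at unfolding z_def by metis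
    define A where "A v = mt t \<bullet> frechet_derivative Gam (at z) (v, 0) - frechet_derivative L (at z) (v, 0)" for v
    define B where "B v = mt t \<bullet> frechet_derivative Gam (at z) (0, v) - frechet_derivative L (at z) (0, v)" for v
    have kq: "((\<lambda>q'. (q', u t)) has_derivative (\<lambda>h. (h, 0))) (at (\<sigma> t))"
      by (rule has_derivative_Pair[OF has_derivative_ident has_derivative_const])
    have ku: "((\<lambda>u'. (\<sigma> t, u')) has_derivative (\<lambda>h. (0, h))) (at (u t))"
      by (rule has_derivative_Pair[OF has_derivative_const has_derivative_ident])
    have linA: "linear A"
      using has_derivative_linear[OF Ham_deriv[OF sG sL kq, of "mt t"]] unfolding A_def z_def by simp
    have linB: "linear B"
      using has_derivative_linear[OF Ham_deriv[OF sG sL ku, of "mt t"]] unfolding B_def z_def by simp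
    have Aq: "dH_dq Gam L (\<sigma> t) (mt t) (u t) i = A (axis i 1)" for i
      unfolding A_def z_def by (rule dHq_eq[OF sG sL])
    have Bu: "B (axis a 1) = 0" for a
      using Ht dHu_eq[OF sG sL] unfolding B_def z_def by metis
    have linG: "linear (frechet_derivative Gam (at z))"
      using smooth_has_derivative[OF sG] has_derivative_linear by blast
    have linL: "linear (frechet_derivative L (at z))"
      using smooth_has_derivative[OF sL] has_derivative_linear by blast
    have eq: "D t \<bullet> fst w + mt t \<bullet> frechet_derivative Gam (at z) w = frechet_derivative L (at z) w" for w
    proof -
      obtain v v' where w: "w = (v, 0) + (0, v')" by (cases w) simp
      have "D t \<bullet> v = - A v"
        unfolding Dt inner_vec_def lin_basis[OF linA, of v] Aq
        by (simp add: sum_negf[symmetric] mult.commute)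
      moreover have "B v' = 0" unfolding lin_basis[OF linB, of v'] Bu by simp
      moreover have "frechet_derivative Gam (at z) w = frechet_derivative Gam (at z) (v, 0) + frechet_derivative Gam (at z) (0, v')"
        unfolding w by (rule linear_add[OF linG])
      moreover have "frechet_derivative L (at z) w = frechet_derivative L (at z) (v, 0) + frechet_derivative L (at z) (0, v')"
        unfolding w by (rule linear_add[OF linL])
      moreover have "fst w = v" unfolding w by simp
      ultimately show ?thesis
        by (simp add: A_def B_def inner_add_right)
    qed
    show ?thesis unfolding Sigma_mem[OF sG] \<mu>_def
      apply (rule exI[of _ z], rule exI[of _ "D t"], rule exI[of _ "mt t"])
      using eq sd by (simp add: z_def)
  qed
  have intX: "integral {t0..t1}
      (\<lambda>t. pairing (snd (\<mu> t)) (complete_lift X t (\<sigma> t, vector_derivative \<sigma> (at t)))) = 0"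
    if sX: "smooth_fun X" and X0: "X (t0, \<sigma> t0) = 0" and X1: "X (t1, \<sigma> t1) = 0"
    for X :: "real \<times> (real^'n) \<Rightarrow> real^'n"
  proof -
    define F where "F t = mt t \<bullet> X (t, \<sigma> t)" for t
    define f' where "f' t = D t \<bullet> X (t, \<sigma> t) + mt t \<bullet> frechet_derivative X (at (t, \<sigma> t)) (1, vector_derivative \<sigma> (at t))" for t
    have dF: "(F has_vector_derivative f' t) (at t)" for t
    proof -
      have a: "(mt has_derivative (\<lambda>h. h *\<^sub>R D t)) (at t)"
        using smooth_hvd[OF smt] unfolding D_def has_vector_derivative_def .
      have b: "((\<lambda>t. X (t, \<sigma> t)) has_derivative (\<lambda>h. h *\<^sub>R frechet_derivative X (at (t, \<sigma> t)) (1, vector_derivative \<sigma> (at t)))) (at t)"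
        using curve_deriv[OF sX smooth_hvd[OF ss]] unfolding has_vector_derivative_def .
      from has_derivative_inner[OF a b] show ?thesis
        unfolding has_vector_derivative_def F_def f'_def
        by (simp add: algebra_simps inner_commute)
    qed
    have "(f' has_integral F t1 - F t0) {t0..t1}"
      using \<open>t0 < t1\<close> dF by (intro fundamental_theorem_of_calculus) (auto intro: has_vector_derivative_at_within)
    then have "integral {t0..t1} f' = 0" using X0 X1 by (simp add: F_def integral_unique)
    moreover have "(\<lambda>t. pairing (snd (\<mu> t)) (complete_lift X t (\<sigma> t, vector_derivative \<sigma> (at t)))) = f'"
      by (simp add: \<mu>_def pairing_def complete_lift_def f'_def fun_eq_iff)
    ultimately show ?thesis by simp
  qed
  show ?thesis unfolding gen_var_solution_def
    apply (rule exI[of _ \<mu>])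
    using smu mem intX by (simp add: \<mu>_def)
qed



lemma fwd_dir:
  fixes Gam :: "(real^'n) \<times> (real^'m) \<Rightarrow> real^'n"
    and L :: "(real^'n) \<times> (real^'m) \<Rightarrow> real"
    and \<sigma> :: "real \<Rightarrow> real^'n"
    and t0 t1 :: real
  assumes sG: "smooth_fun Gam" and sL: "smooth_fun L"
    and lt: "t0 < t1" and ss: "smooth_fun \<sigma>"
    and GV: "gen_var_solution (Sigma_set Gam L) t0 t1 \<sigma>"
  shows "\<exists>(u :: real \<Rightarrow> real^'m) (mt :: real \<Rightarrow> real^'n).
       smooth_fun mt \<and>
       (\<forall>t\<in>{t0..t1}.
          (mt has_vector_derivative (\<chi> i. - dH_dq Gam L (\<sigma> t) (mt t) (u t) i)) (at t) \<and>
          (\<forall>a. dH_du Gam L (\<sigma> t) (mt t) (u t) a = 0) \<and>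
          (\<sigma> has_vector_derivative (\<chi> i. dH_dp Gam L (\<sigma> t) (mt t) (u t) i)) (at t) \<and>
          (\<chi> i. dH_dp Gam L (\<sigma> t) (mt t) (u t) i) = Gam (\<sigma> t, u t))"
proof -
  obtain \<mu> :: "real \<Rightarrow> ((real^'n) \<times> (real^'n)) \<times> ((real^'n) \<times> (real^'n))" where
    A: "smooth_fun \<mu> \<and> (\<forall>t\<in>{t0..t1}. \<mu> t \<in> Sigma_set Gam L) \<and>
        (\<forall>t\<in>{t0..t1}. fst (\<mu> t) = (\<sigma> t, vector_derivative \<sigma> (at t))) \<and>
        (\<forall>X :: real \<times> (real^'n) \<Rightarrow> real^'n.
            smooth_fun X \<and> X (t0, \<sigma> t0) = 0 \<and> X (t1, \<sigma> t1) = 0 \<longrightarrow>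
            integral {t0..t1}
              (\<lambda>t. pairing (snd (\<mu> t)) (complete_lift X t (\<sigma> t, vector_derivative \<sigma> (at t)))) = 0)"
    using GV unfolding gen_var_solution_def by (elim exE) (rule that, assumption)
  have smu: "smooth_fun \<mu>" and mem: "\<forall>t\<in>{t0..t1}. \<mu> t \<in> Sigma_set Gam L"
    and fmu: "\<forall>t\<in>{t0..t1}. fst (\<mu> t) = (\<sigma> t, vector_derivative \<sigma> (at t))"
    using A by simp_all
  have intX: "integral {t0..t1}
              (\<lambda>t. pairing (snd (\<mu> t)) (complete_lift X t (\<sigma> t, vector_derivative \<sigma> (at t)))) = 0"
    if "smooth_fun X" "X (t0, \<sigma> t0) = 0" "X (t1, \<sigma> t1) = 0" for X :: "real \<times> (real^'n) \<Rightarrow> real^'n"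
    using A that by simp
  define M where "M t = fst (snd (\<mu> t))" for t
  define MT where "MT t = snd (snd (\<mu> t))" for t
  have sMT: "smooth_fun MT" unfolding MT_def
    by (intro smooth_linear[OF bounded_linear_snd] smu)
  have sM: "smooth_fun M" unfolding M_def
    by (intro smooth_linear[OF bounded_linear_snd] smooth_linear[OF bounded_linear_fst] smu)
  have ex: "\<forall>t\<in>{t0..t1}. \<exists>uu. Gam (\<sigma> t, uu) = vector_derivative \<sigma> (at t) \<and>
     (\<forall>w. M t \<bullet> fst w + MT t \<bullet> frechet_derivative Gam (at (\<sigma> t, uu)) w = frechet_derivative L (at (\<sigma> t, uu)) w)"
  proof
    fix t assume t: "t \<in> {t0..t1}"
    obtain z m mt where z: "\<mu> t = ((fst z, Gam z), (m, mt))"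
      "\<forall>w. m \<bullet> fst w + mt \<bullet> frechet_derivative Gam (at z) w = frechet_derivative L (at z) w"
      using mem t Sigma_mem[OF sG] by blast
    have "fst (\<mu> t) = (\<sigma> t, vector_derivative \<sigma> (at t))" using fmu t by blast
    then have "fst z = \<sigma> t" "Gam z = vector_derivative \<sigma> (at t)" using z(1) by simp_all
    then have "z = (\<sigma> t, snd z)" by (simp add: prod_eq_iff)
    then show "\<exists>uu. Gam (\<sigma> t, uu) = vector_derivative \<sigma> (at t) \<and>
     (\<forall>w. M t \<bullet> fst w + MT t \<bullet> frechet_derivative Gam (at (\<sigma> t, uu)) w = frechet_derivative L (at (\<sigma> t, uu)) w)"
      using z \<open>Gam z = _\<close> unfolding M_def MT_def by (intro exI[of _ "snd z"]) auto
  qed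
  then obtain u where u: "\<forall>t\<in>{t0..t1}. Gam (\<sigma> t, u t) = vector_derivative \<sigma> (at t) \<and>
     (\<forall>w. M t \<bullet> fst w + MT t \<bullet> frechet_derivative Gam (at (\<sigma> t, u t)) w = frechet_derivative L (at (\<sigma> t, u t)) w)"
    using bchoice[OF ex] by blast
  define D where "D t = vector_derivative MT (at t)" for t
  have sD: "smooth_fun D" unfolding D_def by (rule smooth_vd_smooth[OF sMT])
  have comp: "\<forall>t\<in>{t0..t1}. M t $ i - D t $ i = 0" for i
  proof (rule DBR[OF lt])
    have "smooth_fun (\<lambda>t. M t $ i)" "smooth_fun (\<lambda>t. D t $ i)"
      by (intro smooth_linear[OF bounded_linear_vec_nth] sM sD)+
    then show gc: "continuous_on {t0..t1} (\<lambda>t. M t $ i - D t $ i)"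
      by (intro continuous_on_diff smooth_cont)
    fix p :: "real \<Rightarrow> real" assume rp: "real_polynomial_function p"
    define \<phi> where "\<phi> t = (t - t0) * (t1 - t) * p t" for t
    have pl: "real_polynomial_function (\<lambda>t::real. t)"
      by (rule real_polynomial_function.intros(1)[OF bounded_linear_ident])
    have pc: "real_polynomial_function (\<lambda>t::real. c)" for c
      by (rule real_polynomial_function.intros(2))
    have rphi: "real_polynomial_function \<phi>"
      unfolding \<phi>_def
      by (rule real_polynomial_function.intros(4)[OF real_polynomial_function.intros(4) rp],
          rule real_polynomial_function_diff[OF pl pc], rule real_polynomial_function_diff[OF pc pl])
    obtain \<phi>' where phi': "real_polynomial_function \<phi>'" "\<And>x. (\<phi> has_real_derivative \<phi>' x) (at x)"
      using has_real_derivative_polynomial_function[OF rphi] by blast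
    have phic: "continuous_on S \<phi>" for S
      using continuous_real_polymonial_function[OF rphi] continuous_at_imp_continuous_on by blast
    define X where "X = (\<lambda>x::real \<times> (real^'n). \<phi> (fst x) *\<^sub>R (axis i 1 :: real^'n))"
    have sX: "smooth_fun X" unfolding X_def by (rule poly_smooth[OF rphi])
    have X0: "X (t0, \<sigma> t0) = 0" "X (t1, \<sigma> t1) = 0" unfolding X_def \<phi>_def by simp_all
    have pe: "pairing (snd (\<mu> t)) (complete_lift X t (\<sigma> t, vector_derivative \<sigma> (at t)))
        = \<phi> t * M t $ i + \<phi>' t * MT t $ i" for t
      unfolding pairing_def complete_lift_def X_def[abs_def] X_poly_deriv[OF phi'(2)]
      by (simp add: M_def MT_def inner_axis)
    define f' where "f' t = D t $ i * \<phi> t + MT t $ i * \<phi>' t" for t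
    have dF: "((\<lambda>t. MT t $ i * \<phi> t) has_vector_derivative f' t) (at t)" for t
    proof -
      have "((\<lambda>t. MT t $ i) has_real_derivative D t $ i) (at t)"
        using hvd_nth[OF smooth_hvd[OF sMT]] unfolding D_def has_real_derivative_iff_has_vector_derivative .
      from DERIV_mult[OF this phi'(2)] show ?thesis
        unfolding has_real_derivative_iff_has_vector_derivative f'_def by (simp add: mult.commute)
    qed
    have "(f' has_integral (MT t1 $ i * \<phi> t1 - MT t0 $ i * \<phi> t0)) {t0..t1}"
      using lt dF by (intro fundamental_theorem_of_calculus) (auto intro: has_vector_derivative_at_within)
    then have hf': "(f' has_integral 0) {t0..t1}" by (simp add: \<phi>_def)
    have i1: "(\<lambda>t. (M t $ i - D t $ i) * \<phi> t) integrable_on {t0..t1}"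
      by (intro integrable_continuous_interval continuous_on_mult gc phic)
    have "0 = integral {t0..t1} (\<lambda>t. pairing (snd (\<mu> t)) (complete_lift X t (\<sigma> t, vector_derivative \<sigma> (at t))))"
      using intX[OF sX X0] by simp
    also have "\<dots> = integral {t0..t1} (\<lambda>t. (M t $ i - D t $ i) * \<phi> t + f' t)"
      unfolding pe f'_def by (rule integral_cong) (simp add: algebra_simps)
    also have "\<dots> = integral {t0..t1} (\<lambda>t. (M t $ i - D t $ i) * \<phi> t)"
      using integral_add[OF i1 has_integral_integrable[OF hf']] integral_unique[OF hf'] by simp
    finally show "integral {t0..t1} (\<lambda>t. (M t $ i - D t $ i) * ((t - t0) * (t1 - t) * p t)) = 0"
      unfolding \<phi>_def by simp
  qed
  have DM: "D t = M t" if "t \<in> {t0..t1}" for t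
    using comp that by (simp add: vec_eq_iff)
  show ?thesis
  proof (intro exI[of _ u] exI[of _ MT] conjI sMT ballI)
    fix t assume t: "t \<in> {t0..t1}"
    have Gu: "Gam (\<sigma> t, u t) = vector_derivative \<sigma> (at t)" using u t by blast
    have E: "\<And>w. M t \<bullet> fst w + MT t \<bullet> frechet_derivative Gam (at (\<sigma> t, u t)) w = frechet_derivative L (at (\<sigma> t, u t)) w"
      using u t by blast
    have "(\<chi> i. - dH_dq Gam L (\<sigma> t) (MT t) (u t) i) = M t"
    proof -
      have "- dH_dq Gam L (\<sigma> t) (MT t) (u t) i = M t $ i" for i
        using E[of "(axis i 1, 0)"] unfolding dHq_eq[OF sG sL] by (simp add: inner_axis)
      then show ?thesis by (simp add: vec_eq_iff)
    qed
    then show "(MT has_vector_derivative (\<chi> i. - dH_dq Gam L (\<sigma> t) (MT t) (u t) i)) (at t)"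
      using smooth_hvd[OF sMT, of t] DM[OF t] unfolding D_def by simp
    show "\<forall>a. dH_du Gam L (\<sigma> t) (MT t) (u t) a = 0"
    proof
      fix a
      show "dH_du Gam L (\<sigma> t) (MT t) (u t) a = 0"
        using E[of "(0, axis a 1)"] unfolding dHu_eq[OF sG sL] by simp
    qed
    show "(\<sigma> has_vector_derivative (\<chi> i. dH_dp Gam L (\<sigma> t) (MT t) (u t) i)) (at t)"
      unfolding dHp_vec Gu by (rule smooth_hvd[OF ss])
    show "(\<chi> i. dH_dp Gam L (\<sigma> t) (MT t) (u t) i) = Gam (\<sigma> t, u t)" by (rule dHp_vec)
  qed
qed

theorem mainTheorem7:
  fixes Gam :: "(real^'n) \<times> (real^'m) \<Rightarrow> real^'n"
    and L :: "(real^'n) \<times> (real^'m) \<Rightarrow> real"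
    and \<sigma> :: "real \<Rightarrow> real^'n"
    and t0 t1 :: real
  assumes "smooth_fun Gam" and "smooth_fun L"
    and "t0 < t1" and "smooth_fun \<sigma>"
  shows "gen_var_solution (Sigma_set Gam L) t0 t1 \<sigma> \<longleftrightarrow>
    (\<exists>(u :: real \<Rightarrow> real^'m) (mt :: real \<Rightarrow> real^'n).
       smooth_fun mt \<and>
       (\<forall>t\<in>{t0..t1}.
          (mt has_vector_derivative (\<chi> i. - dH_dq Gam L (\<sigma> t) (mt t) (u t) i)) (at t) \<and>
          (\<forall>a. dH_du Gam L (\<sigma> t) (mt t) (u t) a = 0) \<and>
          (\<sigma> has_vector_derivative (\<chi> i. dH_dp Gam L (\<sigma> t) (mt t) (u t) i)) (at t) \<and>
          (\<chi> i. dH_dp Gam L (\<sigma> t) (mt t) (u t) i) = Gam (\<sigma> t, u t)))" (is "_ \<longleftrightarrow> ?R")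
proof
  assume "gen_var_solution (Sigma_set Gam L) t0 t1 \<sigma>"
  then show ?R by (rule fwd_dir[OF assms])
next
  assume ?R
  then show "gen_var_solution (Sigma_set Gam L) t0 t1 \<sigma>"
    by (elim exE conjE) (rule back_dir[OF assms]; assumption)
qed

end
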